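(* In the upper half-space model $\mathbb{H}^3=\{x_3>0\}$ with metric $\frac{1}{x_3^2}(dx_1^2+dx_2^2+dx_3^2)$, let $\gamma:[0,\infty)\to\mathbb{H}^3$, $\gamma(s)=(\gamma_1(s),0,\gamma_2(s))$, be a regular curve parametrized by hyperbolic arc length with $\gamma_1>0$, $\gamma_2>0$, and set $x_g(\gamma([0,s]))=\frac{1}{s}\int_0^s\frac{\gamma_1(t)}{\gamma_2(t)}\,dt$. Suppose $\gamma$ has confined centroid, i.e. $\lim_{s\to\infty}x_g(\gamma([0,s]))$ exists and is finite. Then the end of revolution $f(\theta,s)=R_\theta\gamma(s)$ is parabolic.
   Context: $R_\theta$ is the rotation of angle $\theta$ about the $x_3$-axis, an isometry of $\mathbb{H}^3$. The end carries the induced metric. An end is parabolic if every bounded harmonic function on it is determined by its boundary values. *)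

theory Defs
  imports "HOL-Analysis.Analysis"
begin

definition hyp_inner :: "real^3 \<Rightarrow> real^3 \<Rightarrow> real^3 \<Rightarrow> real" where
  "hyp_inner p v w = inner v w / (p$3)\<^sup>2"

definition rot3 :: "real \<Rightarrow> real^3 \<Rightarrow> real^3" where
  "rot3 \<theta> p = vector [cos \<theta> * p$1 - sin \<theta> * p$2, sin \<theta> * p$1 + cos \<theta> * p$2, p$3]"

definition hcurve :: "(real \<Rightarrow> real) \<Rightarrow> (real \<Rightarrow> real) \<Rightarrow> real \<Rightarrow> real^3" where
  "hcurve \<gamma>1 \<gamma>2 s = vector [\<gamma>1 s, 0, \<gamma>2 s]"

definition smooth_near_halfline :: "(real \<Rightarrow> real) \<Rightarrow> bool" where
  "smooth_near_halfline g \<longleftrightarrow>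
     (\<exists>\<epsilon>>0. \<forall>k x. x > -\<epsilon> \<longrightarrow> ((deriv ^^ k) g) differentiable (at x))"

definition centroid_xg :: "(real \<Rightarrow> real) \<Rightarrow> (real \<Rightarrow> real) \<Rightarrow> real \<Rightarrow> real" where
  "centroid_xg \<gamma>1 \<gamma>2 s = (1 / s) * integral {0..s} (\<lambda>t. \<gamma>1 t / \<gamma>2 t)"

definition pd_th :: "(real \<Rightarrow> real \<Rightarrow> real) \<Rightarrow> real \<Rightarrow> real \<Rightarrow> real" where
  "pd_th u \<theta> s = deriv (\<lambda>t. u t s) \<theta>"

definition pd_s :: "(real \<Rightarrow> real \<Rightarrow> real) \<Rightarrow> real \<Rightarrow> real \<Rightarrow> real" where
  "pd_s u \<theta> s = deriv (\<lambda>t. u \<theta> t) s"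

definition unc :: "(real \<Rightarrow> real \<Rightarrow> real) \<Rightarrow> real \<times> real \<Rightarrow> real" where
  "unc u p = u (fst p) (snd p)"

definition C1_on :: "(real \<times> real) set \<Rightarrow> (real \<Rightarrow> real \<Rightarrow> real) \<Rightarrow> bool" where
  "C1_on S u \<longleftrightarrow> continuous_on S (unc u) \<and>
     (\<forall>p\<in>S. ((\<lambda>t. u t (snd p)) has_real_derivative pd_th u (fst p) (snd p)) (at (fst p)) \<and>
             ((\<lambda>t. u (fst p) t) has_real_derivative pd_s u (fst p) (snd p)) (at (snd p))) \<and>
     continuous_on S (unc (pd_th u)) \<and> continuous_on S (unc (pd_s u))"

definition C2_on :: "(real \<times> real) set \<Rightarrow> (real \<Rightarrow> real \<Rightarrow> real) \<Rightarrow> bool" where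
  "C2_on S u \<longleftrightarrow> C1_on S u \<and> C1_on S (pd_th u) \<and> C1_on S (pd_s u)"

definition f_th :: "(real \<Rightarrow> real \<Rightarrow> real^3) \<Rightarrow> real \<Rightarrow> real \<Rightarrow> real^3" where
  "f_th f \<theta> s = vector_derivative (\<lambda>t. f t s) (at \<theta>)"

definition f_s :: "(real \<Rightarrow> real \<Rightarrow> real^3) \<Rightarrow> real \<Rightarrow> real \<Rightarrow> real^3" where
  "f_s f \<theta> s = vector_derivative (\<lambda>t. f \<theta> t) (at s)"

definition metE :: "(real \<Rightarrow> real \<Rightarrow> real^3) \<Rightarrow> real \<Rightarrow> real \<Rightarrow> real" where
  "metE f \<theta> s = hyp_inner (f \<theta> s) (f_th f \<theta> s) (f_th f \<theta> s)"

definition metF :: "(real \<Rightarrow> real \<Rightarrow> real^3) \<Rightarrow> real \<Rightarrow> real \<Rightarrow> real" where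
  "metF f \<theta> s = hyp_inner (f \<theta> s) (f_th f \<theta> s) (f_s f \<theta> s)"

definition metG :: "(real \<Rightarrow> real \<Rightarrow> real^3) \<Rightarrow> real \<Rightarrow> real \<Rightarrow> real" where
  "metG f \<theta> s = hyp_inner (f \<theta> s) (f_s f \<theta> s) (f_s f \<theta> s)"

definition metD :: "(real \<Rightarrow> real \<Rightarrow> real^3) \<Rightarrow> real \<Rightarrow> real \<Rightarrow> real" where
  "metD f \<theta> s = metE f \<theta> s * metG f \<theta> s - (metF f \<theta> s)\<^sup>2"

text \<open>Laplace-Beltrami operator of the induced metric in coordinates:
  (1/sqrt D) (d_theta (sqrt D (g^{tt} u_t + g^{ts} u_s)) + d_s (sqrt D (g^{st} u_t + g^{ss} u_s))).\<close>
definition laplace_beltrami ::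
  "(real \<Rightarrow> real \<Rightarrow> real^3) \<Rightarrow> (real \<Rightarrow> real \<Rightarrow> real) \<Rightarrow> real \<Rightarrow> real \<Rightarrow> real" where
  "laplace_beltrami f u \<theta> s =
     (1 / sqrt (metD f \<theta> s)) *
     (pd_th (\<lambda>a b. sqrt (metD f a b) *
              (metG f a b * pd_th u a b - metF f a b * pd_s u a b) / metD f a b) \<theta> s
    + pd_s (\<lambda>a b. sqrt (metD f a b) *
              (metE f a b * pd_s u a b - metF f a b * pd_th u a b) / metD f a b) \<theta> s)"

text \<open>An end parametrized by f(theta,s), theta in R/2piZ, s \<ge> 0, with boundary s = 0.
  A function on the end is a 2pi-periodic function of theta; it is a bounded
  harmonic function if it is continuous up to the boundary, bounded, C^2 in the
  interior s > 0 and annihilated there by the Laplace-Beltrami operator of the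
  induced metric.\<close>
definition bounded_harmonic_on_end ::
  "(real \<Rightarrow> real \<Rightarrow> real^3) \<Rightarrow> (real \<Rightarrow> real \<Rightarrow> real) \<Rightarrow> bool" where
  "bounded_harmonic_on_end f u \<longleftrightarrow>
     (\<forall>\<theta> s. u (\<theta> + 2 * pi) s = u \<theta> s) \<and>
     continuous_on {p. snd p \<ge> 0} (unc u) \<and>
     (\<exists>B. \<forall>\<theta> s. s \<ge> 0 \<longrightarrow> \<bar>u \<theta> s\<bar> \<le> B) \<and>
     C2_on {p. snd p > 0} u \<and>
     (\<forall>\<theta> s. s > 0 \<longrightarrow> laplace_beltrami f u \<theta> s = 0)"

definition parabolic_end :: "(real \<Rightarrow> real \<Rightarrow> real^3) \<Rightarrow> bool" where
  "parabolic_end f \<longleftrightarrow>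
     (\<forall>u v. bounded_harmonic_on_end f u \<and> bounded_harmonic_on_end f v \<and>
            (\<forall>\<theta>. u \<theta> 0 = v \<theta> 0) \<longrightarrow> (\<forall>\<theta> s. s \<ge> 0 \<longrightarrow> u \<theta> s = v \<theta> s))"

end

theory Submission
  imports Defs
begin

lemma vec3_decomp: "(vector [a,b,c] :: real^3) = a *\<^sub>R vector[1,0,0] + b *\<^sub>R vector[0,1,0] + c *\<^sub>R vector[0,0,1]"
  by (simp add: vec_eq_iff forall_3)

lemma vec3_deriv:
  assumes "(a has_real_derivative a') (at x)" "(b has_real_derivative b') (at x)" "(c has_real_derivative c') (at x)"
  shows "((\<lambda>t. vector [a t, b t, c t] :: real^3) has_vector_derivative vector [a', b', c']) (at x)"
proof -
  have h: "((\<lambda>t. f t *\<^sub>R e) has_vector_derivative f' *\<^sub>R e) (at x)" if "(f has_real_derivative f') (at x)" for f f' and e::"real^3"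
    using has_vector_derivative_scaleR[OF that has_vector_derivative_const[of e]] by simp
  show ?thesis
    unfolding vec3_decomp[of "a' "] vec3_decomp[of "a _"]
    by (intro has_vector_derivative_add h assms)
qed

lemma inner3: "inner (x::real^3) y = x$1*y$1 + x$2*y$2 + x$3*y$3"
  by (simp add: inner_vec_def sum_3)

lemma geo:
  fixes \<gamma>1 \<gamma>2 :: "real \<Rightarrow> real"
  assumes d1: "\<gamma>1 differentiable (at s)" and d2: "\<gamma>2 differentiable (at s)"
    and p2: "\<gamma>2 s > 0"
    and al: "hyp_inner (hcurve \<gamma>1 \<gamma>2 s)
                       (vector_derivative (hcurve \<gamma>1 \<gamma>2) (at s))
                       (vector_derivative (hcurve \<gamma>1 \<gamma>2) (at s)) = 1"
  shows "metE (\<lambda>\<theta> s. rot3 \<theta> (hcurve \<gamma>1 \<gamma>2 s)) \<theta> s = (\<gamma>1 s / \<gamma>2 s)^2"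
    "metF (\<lambda>\<theta> s. rot3 \<theta> (hcurve \<gamma>1 \<gamma>2 s)) \<theta> s = 0"
    "metG (\<lambda>\<theta> s. rot3 \<theta> (hcurve \<gamma>1 \<gamma>2 s)) \<theta> s = 1"
proof -
  let ?F = "\<lambda>\<theta> s. rot3 \<theta> (hcurve \<gamma>1 \<gamma>2 s)"
  have D1: "(\<gamma>1 has_real_derivative deriv \<gamma>1 s) (at s)" using d1 DERIV_deriv_iff_real_differentiable by blast
  have D2: "(\<gamma>2 has_real_derivative deriv \<gamma>2 s) (at s)" using d2 DERIV_deriv_iff_real_differentiable by blast
  have eqF: "?F = (\<lambda>\<theta> s. vector [cos \<theta> * \<gamma>1 s, sin \<theta> * \<gamma>1 s, \<gamma>2 s])"
    by (simp add: rot3_def hcurve_def fun_eq_iff)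
  have "((\<lambda>t. vector [cos t * \<gamma>1 s, sin t * \<gamma>1 s, \<gamma>2 s] :: real^3) has_vector_derivative
        vector [- sin \<theta> * \<gamma>1 s, cos \<theta> * \<gamma>1 s, 0]) (at \<theta>)"
    by (intro vec3_deriv derivative_eq_intros) auto
  then have th: "f_th ?F \<theta> s = vector [- sin \<theta> * \<gamma>1 s, cos \<theta> * \<gamma>1 s, 0]"
    unfolding f_th_def eqF by (rule vector_derivative_at)
  have "((\<lambda>t. vector [cos \<theta> * \<gamma>1 t, sin \<theta> * \<gamma>1 t, \<gamma>2 t] :: real^3) has_vector_derivative
        vector [cos \<theta> * deriv \<gamma>1 s, sin \<theta> * deriv \<gamma>1 s, deriv \<gamma>2 s]) (at s)"
    by (intro vec3_deriv derivative_eq_intros) (auto intro: D1 D2)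
  then have fs: "f_s ?F \<theta> s = vector [cos \<theta> * deriv \<gamma>1 s, sin \<theta> * deriv \<gamma>1 s, deriv \<gamma>2 s]"
    unfolding f_s_def eqF by (rule vector_derivative_at)
  have hc: "hcurve \<gamma>1 \<gamma>2 = (\<lambda>t. vector [\<gamma>1 t, 0, \<gamma>2 t])" by (simp add: hcurve_def fun_eq_iff)
  have "((\<lambda>t. vector [\<gamma>1 t, 0, \<gamma>2 t] :: real^3) has_vector_derivative
        vector [deriv \<gamma>1 s, 0, deriv \<gamma>2 s]) (at s)"
    by (intro vec3_deriv derivative_eq_intros) (auto intro: D1 D2)
  then have hv: "vector_derivative (hcurve \<gamma>1 \<gamma>2) (at s) = vector [deriv \<gamma>1 s, 0, deriv \<gamma>2 s]"
    unfolding hc by (rule vector_derivative_at)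
  have al2: "((deriv \<gamma>1 s)^2 + (deriv \<gamma>2 s)^2) / (\<gamma>2 s)^2 = 1"
  proof -
    have i: "inner (vector [deriv \<gamma>1 s, 0, deriv \<gamma>2 s]) (vector [deriv \<gamma>1 s, 0, deriv \<gamma>2 s] :: real^3) = (deriv \<gamma>1 s)^2 + (deriv \<gamma>2 s)^2"
      by (simp add: inner3 power2_eq_square)
    have c: "hcurve \<gamma>1 \<gamma>2 s $ 3 = \<gamma>2 s" by (simp add: hcurve_def)
    show ?thesis using al unfolding hv hyp_inner_def i c .
  qed
  have pt: "?F \<theta> s $ 3 = \<gamma>2 s" by (simp add: rot3_def hcurve_def)
  have e1: "inner (f_th ?F \<theta> s) (f_th ?F \<theta> s) = (\<gamma>1 s)^2"
    unfolding th inner3 vector_3 using sin_cos_squared_add[of \<theta>] by algebra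
  show "metE ?F \<theta> s = (\<gamma>1 s / \<gamma>2 s)^2"
    unfolding metE_def hyp_inner_def pt e1 by (simp add: power_divide)
  show "metF ?F \<theta> s = 0"
    unfolding metF_def hyp_inner_def th fs pt by (simp add: inner3 algebra_simps)
  have g1: "inner (f_s ?F \<theta> s) (f_s ?F \<theta> s) = (deriv \<gamma>1 s)^2 + (deriv \<gamma>2 s)^2"
    unfolding fs inner3 vector_3 using sin_cos_squared_add[of \<theta>] by algebra
  show "metG ?F \<theta> s = 1"
    unfolding metG_def hyp_inner_def pt g1 by (rule al2)
qed

lemma periodic_int:
  fixes f :: "real \<Rightarrow> 'a"
  assumes p: "\<And>x. f (x + 2*pi) = f x"
  shows "f (x + 2*pi* of_int k) = f x"
proof (induction k rule: int_induct[where k=0])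
  case base then show ?case by simp
next
  case (step1 i)
  have "f (x + 2*pi* of_int (i+1)) = f ((x + 2*pi* of_int i) + 2*pi)" by (simp add: algebra_simps)
  then show ?case using p step1 by simp
next
  case (step2 i)
  have "f (x + 2*pi* of_int i) = f ((x + 2*pi* of_int (i - 1)) + 2*pi)" by (simp add: algebra_simps)
  then show ?case using p step2 by simp
qed

lemma periodic_reduce:
  fixes f :: "real \<Rightarrow> 'a"
  assumes p: "\<And>x. f (x + 2*pi) = f x"
  shows "\<exists>x'. 0 \<le> x' \<and> x' \<le> 2*pi \<and> (\<forall>g. (\<forall>y. g (y + 2*pi) = g y) \<longrightarrow> g x' = g x)"
proof -
  define k where "k = \<lfloor>x / (2*pi)\<rfloor>"
  define x' where "x' = x + 2*pi* of_int (-k)"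
  have a: "of_int k \<le> x/(2*pi)" "x/(2*pi) < of_int k + 1" unfolding k_def by linarith+
  have "2*pi* of_int k \<le> x" using a(1) pi_gt_zero by (simp add: field_simps)
  moreover have "x < 2*pi*(of_int k + 1)" using a(2) pi_gt_zero by (simp add: field_simps)
  ultimately have "0 \<le> x'" "x' \<le> 2*pi" unfolding x'_def by (auto simp: algebra_simps)
  moreover have "\<forall>g. (\<forall>y. g (y + 2*pi) = g y) \<longrightarrow> g x' = (g x :: 'b)" for dummy :: 'b
    unfolding x'_def using periodic_int by blast
  ultimately show ?thesis by blast
qed

lemma max_2nd:
  fixes q q' \<rho> k :: "real \<Rightarrow> real"
  assumes ab: "a < x0" "x0 < b"
    and mx: "\<forall>x\<in>{a<..<b}. q x \<le> q x0"
    and dq: "\<forall>x\<in>{a<..<b}. (q has_real_derivative q' x) (at x)"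
    and rp: "\<forall>x\<in>{a<..<b}. \<rho> x > 0"
    and kq: "\<forall>x\<in>{a<..<b}. k x = \<rho> x * q' x"
    and dk: "(k has_real_derivative K) (at x0)"
  shows "K \<le> 0"
proof (rule ccontr)
  assume "\<not> K \<le> 0"
  then have K: "K > 0" by simp
  define d0 where "d0 = min (x0 - a) (b - x0)"
  have d0: "d0 > 0" using ab by (simp add: d0_def)
  have "q' x0 = 0"
  proof (rule DERIV_local_max[OF _ d0])
    show "(q has_real_derivative q' x0) (at x0)" using dq ab by auto
    show "\<forall>y. \<bar>x0 - y\<bar> < d0 \<longrightarrow> q y \<le> q x0" using mx by (auto simp: d0_def abs_if split: if_splits)
  qed
  then have k0: "k x0 = 0" using kq ab by auto
  obtain d where d: "d > 0" "\<forall>h>0. h < d \<longrightarrow> k x0 < k (x0 + h)"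
    using DERIV_pos_inc_right[OF dk K] by blast
  define h where "h = min d d0 / 2"
  have h: "h > 0" "h < d" "h < d0" using d d0 by (auto simp: h_def)
  have "\<exists>z. x0 < z \<and> z < x0 + h \<and> q (x0 + h) - q x0 = (x0 + h - x0) * q' z"
    by (rule MVT2) (use h dq in \<open>auto simp: d0_def\<close>)
  then obtain z where z: "x0 < z" "z < x0 + h" "q (x0 + h) - q x0 = h * q' z" by auto
  have zin: "z \<in> {a<..<b}" using z h ab by (auto simp: d0_def)
  have "k z > 0" using d(2)[rule_format, of "z - x0"] z h k0 by auto
  then have "q' z > 0" using kq rp zin by (force simp add: zero_less_mult_iff)
  then have "q (x0 + h) > q x0" using z h by (simp add: algebra_simps)
  moreover have "x0 + h \<in> {a<..<b}" using h ab by (auto simp: d0_def)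
  ultimately show False using mx by force
qed

lemma lb_reduce:
  fixes F :: "real \<Rightarrow> real \<Rightarrow> real^3" and u r :: "_"
  assumes rpos: "\<forall>b>0. r b > 0"
    and met: "\<forall>a b. b > 0 \<longrightarrow> metE F a b = (r b)^2 \<and> metF F a b = 0 \<and> metG F a b = 1"
    and dr: "(r has_real_derivative r') (at s)" and s: "s > 0"
    and C2: "C2_on {p. snd p > 0} u"
  shows "((\<lambda>b. r b * pd_s u \<theta> b) has_real_derivative (r' * pd_s u \<theta> s + r s * pd_s (pd_s u) \<theta> s)) (at s)"
    and "laplace_beltrami F u \<theta> s = (1 / r s) * (pd_th (pd_th u) \<theta> s / r s + (r' * pd_s u \<theta> s + r s * pd_s (pd_s u) \<theta> s))"
proof -
  have D: "metD F a b = (r b)^2" if "b > 0" for a b using met that by (simp add: metD_def)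
  have sD: "sqrt (metD F a b) = r b" if "b > 0" for a b using D[OF that] rpos that by (simp add: abs_of_pos)
  have C1u: "C1_on {p. snd p > 0} u" and C1t: "C1_on {p. snd p > 0} (pd_th u)" and C1s: "C1_on {p. snd p > 0} (pd_s u)"
    using C2 by (auto simp: C2_on_def)
  have du: "((\<lambda>t. u \<theta> t) has_real_derivative pd_s u \<theta> s) (at s)"
    using C1u s unfolding C1_on_def by force
  have dus: "((\<lambda>t. pd_s u \<theta> t) has_real_derivative pd_s (pd_s u) \<theta> s) (at s)"
    using C1s s unfolding C1_on_def by force
  have dut: "((\<lambda>t. pd_th u t s) has_real_derivative pd_th (pd_th u) \<theta> s) (at \<theta>)"
    using C1t s unfolding C1_on_def by force
  show P: "((\<lambda>b. r b * pd_s u \<theta> b) has_real_derivative (r' * pd_s u \<theta> s + r s * pd_s (pd_s u) \<theta> s)) (at s)"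
    using DERIV_mult[OF dr dus] by (simp add: algebra_simps)
  have rs: "r s > 0" using rpos s by simp
  have e1: "(\<lambda>a. sqrt (metD F a s) * (metG F a s * pd_th u a s - metF F a s * pd_s u a s) / metD F a s)
        = (\<lambda>a. pd_th u a s / r s)"
    using met s sD D rs by (auto simp: fun_eq_iff power2_eq_square)
  have T: "pd_th (\<lambda>a b. sqrt (metD F a b) * (metG F a b * pd_th u a b - metF F a b * pd_s u a b) / metD F a b) \<theta> s
      = pd_th (pd_th u) \<theta> s / r s"
  proof -
    have "pd_th (\<lambda>a b. sqrt (metD F a b) * (metG F a b * pd_th u a b - metF F a b * pd_s u a b) / metD F a b) \<theta> s
       = deriv (\<lambda>a. pd_th u a s / r s) \<theta>"
      using pd_th_def[of "\<lambda>a b. sqrt (metD F a b) * (metG F a b * pd_th u a b - metF F a b * pd_s u a b) / metD F a b" \<theta> s] e1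
      by simp
    also have "\<dots> = pd_th (pd_th u) \<theta> s / r s"
      by (rule DERIV_imp_deriv) (rule DERIV_cdivide[OF dut])
    finally show ?thesis .
  qed
  have S: "pd_s (\<lambda>a b. sqrt (metD F a b) * (metE F a b * pd_s u a b - metF F a b * pd_th u a b) / metD F a b) \<theta> s
      = r' * pd_s u \<theta> s + r s * pd_s (pd_s u) \<theta> s"
    unfolding pd_s_def
  proof (rule DERIV_imp_deriv, rule has_field_derivative_transform_within_open[OF P[unfolded pd_s_def] _ _])
    show "open {0::real<..}" by simp
    show "s \<in> {0<..}" using s by simp
    fix x :: real assume x: "x \<in> {0<..}"
    then have "r x > 0" using rpos by simp
    then show "r x * deriv (\<lambda>t. u \<theta> t) x = sqrt (metD F \<theta> x) * (metE F \<theta> x * deriv (\<lambda>t. u \<theta> t) x - metF F \<theta> x * pd_th u \<theta> x) / metD F \<theta> x"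
      using met sD D x by (simp add: power2_eq_square)
  qed
  show "laplace_beltrami F u \<theta> s = (1 / r s) * (pd_th (pd_th u) \<theta> s / r s + (r' * pd_s u \<theta> s + r s * pd_s (pd_s u) \<theta> s))"
    unfolding laplace_beltrami_def T S sD[OF s] ..
qed

lemma C1_pt:
  assumes "C1_on S u" "(\<theta>, s) \<in> S"
  shows "((\<lambda>t. u t s) has_real_derivative pd_th u \<theta> s) (at \<theta>)"
    "((\<lambda>t. u \<theta> t) has_real_derivative pd_s u \<theta> s) (at s)"
  using assms unfolding C1_on_def by force+

lemma C2_pts:
  assumes "C2_on {p. snd p > 0} u" "s > 0"
  shows "((\<lambda>t. u t s) has_real_derivative pd_th u \<theta> s) (at \<theta>)"
    "((\<lambda>t. u \<theta> t) has_real_derivative pd_s u \<theta> s) (at s)"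
    "((\<lambda>t. pd_th u t s) has_real_derivative pd_th (pd_th u) \<theta> s) (at \<theta>)"
  using C1_pt[of "{p. snd p > 0}" u \<theta> s] C1_pt[of "{p. snd p > 0}" "pd_th u" \<theta> s] assms
  unfolding C2_on_def by auto

lemma onesided:
  fixes F :: "real \<Rightarrow> real \<Rightarrow> real^3" and r h :: "real \<Rightarrow> real" and u v :: "real \<Rightarrow> real \<Rightarrow> real"
  assumes rpos: "\<forall>b\<ge>0. r b > 0"
    and rder: "\<forall>b>0. r differentiable (at b)"
    and met: "\<forall>a b. b > 0 \<longrightarrow> metE F a b = (r b)^2 \<and> metF F a b = 0 \<and> metG F a b = 1"
    and h0: "h 0 = 0"
    and hcont: "\<forall>S>0. continuous_on {0..S} h"
    and hder: "\<forall>b>0. (h has_real_derivative 1 / r b) (at b)"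
    and hinf: "\<forall>M. \<exists>S0. \<forall>S\<ge>S0. M \<le> h S"
    and U: "bounded_harmonic_on_end F u" and V: "bounded_harmonic_on_end F v"
    and bd: "\<forall>\<theta>. u \<theta> 0 = v \<theta> 0" and s: "s \<ge> 0"
  shows "u \<theta> s \<le> v \<theta> s"
proof (rule ccontr)
  assume "\<not> u \<theta> s \<le> v \<theta> s"
  have perU: "\<And>t b. u (t + 2*pi) b = u t b" and cu: "continuous_on {p. snd p \<ge> 0} (unc u)"
    and C2u: "C2_on {p. snd p > 0} u" and LBu: "\<And>t b. b > 0 \<Longrightarrow> laplace_beltrami F u t b = 0"
    using U unfolding bounded_harmonic_on_end_def by auto
  obtain Bu where Bu: "\<And>t b. b \<ge> 0 \<Longrightarrow> \<bar>u t b\<bar> \<le> Bu" using U unfolding bounded_harmonic_on_end_def by auto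
  have perV: "\<And>t b. v (t + 2*pi) b = v t b" and cv: "continuous_on {p. snd p \<ge> 0} (unc v)"
    and C2v: "C2_on {p. snd p > 0} v" and LBv: "\<And>t b. b > 0 \<Longrightarrow> laplace_beltrami F v t b = 0"
    using V unfolding bounded_harmonic_on_end_def by auto
  obtain Bv where Bv: "\<And>t b. b \<ge> 0 \<Longrightarrow> \<bar>v t b\<bar> \<le> Bv" using V unfolding bounded_harmonic_on_end_def by auto
  have red: "\<exists>t'. 0 \<le> t' \<and> t' \<le> 2*pi \<and> u t' b = u t b \<and> v t' b = v t b" for t b
  proof -
    obtain t' where "0 \<le> t'" "t' \<le> 2*pi" "\<forall>g. (\<forall>y. g (y + 2*pi) = g y) \<longrightarrow> g t' = (g t :: real)"
      using periodic_reduce[of "\<lambda>t. u t b" t] perU by blast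
    moreover have "u t' b = u t b" using calculation(3)[rule_format, of "\<lambda>t. u t b"] perU by blast
    moreover have "v t' b = v t b" using calculation(3)[rule_format, of "\<lambda>t. v t b"] perV by blast
    ultimately show ?thesis by blast
  qed
  obtain \<theta>' where \<theta>': "0 \<le> \<theta>'" "\<theta>' \<le> 2*pi" "u \<theta>' s = u \<theta> s" "v \<theta>' s = v \<theta> s" using red by blast
  define \<eta> where "\<eta> = u \<theta>' s - v \<theta>' s"
  have \<eta>: "\<eta> > 0" using \<open>\<not> u \<theta> s \<le> v \<theta> s\<close> \<theta>' by (simp add: \<eta>_def)
  define \<epsilon> where "\<epsilon> = \<eta> / (2*(\<bar>h s\<bar> + 1))"
  have \<epsilon>: "\<epsilon> > 0" using \<eta> by (simp add: \<epsilon>_def add_pos_nonneg)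
  have \<epsilon>h: "\<epsilon> * h s < \<eta>/2"
  proof -
    have "\<epsilon> * h s \<le> \<epsilon> * \<bar>h s\<bar>" using \<epsilon> by (simp add: mult_left_mono)
    also have "\<dots> < \<epsilon> * (\<bar>h s\<bar> + 1)" using \<epsilon> by simp
    also have "\<dots> = \<eta>/2" unfolding \<epsilon>_def by (simp add: field_simps add_pos_nonneg)
    finally show ?thesis .
  qed
  define M where "M = (2*(\<bar>Bu\<bar> + \<bar>Bv\<bar>) + 1) / \<epsilon>"
  obtain S0 where S0: "\<And>S. S \<ge> S0 \<Longrightarrow> M \<le> h S" using hinf by blast
  define S where "S = max S0 (s + 1)"
  have S: "S > s" "S > 0" "M \<le> h S" using S0 s by (auto simp: S_def)
  have \<epsilon>hS: "\<epsilon> * h S \<ge> 2*(\<bar>Bu\<bar> + \<bar>Bv\<bar>) + 1"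
    using mult_left_mono[OF S(3), of \<epsilon>] \<epsilon> by (simp add: M_def)
  define \<delta> where "\<delta> = 1 / (2*((h S)^2 + 1))"
  have hS2: "0 < 2 * (h S)^2 + 2" by (simp add: add_nonneg_pos)
  have \<delta>: "\<delta> > 0" using hS2 by (simp add: \<delta>_def)
  have \<delta>hS: "\<delta> * (h S)^2 \<le> 1/2"
    unfolding \<delta>_def using hS2 by (simp add: field_simps)
  define g where "g p = unc u p - unc v p - \<epsilon> * h (snd p) + \<delta> * (h (snd p))^2" for p
  define K where "K = {0..2*pi} \<times> {0..S}"
  have KS: "K \<subseteq> {p. snd p \<ge> 0}" by (auto simp: K_def)
  have ch: "continuous_on K (\<lambda>p. h (snd p))"
    by (rule continuous_on_compose2[OF hcont[rule_format, OF S(2)] continuous_on_snd]) (auto simp: K_def)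
  have cg: "continuous_on K g" unfolding g_def
    using continuous_on_subset[OF cu KS] continuous_on_subset[OF cv KS] ch
    by (intro continuous_intros) auto
  have "compact K" unfolding K_def by (intro compact_Times compact_Icc)
  moreover have "K \<noteq> {}" using S by (auto simp: K_def)
  ultimately obtain p0 where p0: "p0 \<in> K" "\<And>y. y \<in> K \<Longrightarrow> g y \<le> g p0"
    using continuous_attains_sup[OF _ _ cg] by blast
  obtain \<theta>0 s0 where ps: "p0 = (\<theta>0, s0)" by (cases p0)
  have s0: "0 \<le> s0" "s0 \<le> S" and t0: "0 \<le> \<theta>0" "\<theta>0 \<le> 2*pi" using p0 ps by (auto simp: K_def)
  have "g (\<theta>', s) > 0"
  proof -
    have "g (\<theta>', s) = \<eta> - \<epsilon> * h s + \<delta> * (h s)^2" by (simp add: g_def unc_def \<eta>_def)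
    moreover have "\<delta> * (h s)^2 \<ge> 0" using \<delta> by simp
    ultimately show ?thesis using \<epsilon>h \<eta> by linarith
  qed
  moreover have "(\<theta>', s) \<in> K" using \<theta>' s S by (auto simp: K_def)
  ultimately have gp0: "g p0 > 0" using p0 by force
  have gdef: "g (t, b) = u t b - v t b - \<epsilon> * h b + \<delta> * (h b)^2" for t b by (simp add: g_def unc_def)
  have gmax: "g (t, b) \<le> g (\<theta>0, s0)" if "0 \<le> b" "b \<le> S" for t b
  proof -
    obtain t' where "0 \<le> t'" "t' \<le> 2*pi" "u t' b = u t b" "v t' b = v t b" using red by blast
    then have "g (t, b) = g (t', b)" "(t', b) \<in> K" using that by (auto simp: gdef K_def)
    then show ?thesis using p0 ps by auto
  qed
  consider "s0 = 0" | "s0 = S" | "0 < s0 \<and> s0 < S" using s0 by linarith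
  then show False
  proof cases
    case 1
    then have "g p0 = 0" using ps bd h0 by (simp add: gdef)
    then show False using gp0 by simp
  next
    case 2
    have "g p0 = u \<theta>0 S - v \<theta>0 S - \<epsilon> * h S + \<delta> * (h S)^2" using ps 2 by (simp add: gdef)
    moreover have "u \<theta>0 S \<le> \<bar>Bu\<bar>" "- v \<theta>0 S \<le> \<bar>Bv\<bar>" using Bu[of S \<theta>0] Bv[of S \<theta>0] S by auto
    ultimately have "g p0 < 0" using \<epsilon>hS \<delta>hS abs_ge_zero[of Bu] abs_ge_zero[of Bv] by argo
    then show False using gp0 by simp
  next
    case 3
    then have s0p: "s0 > 0" "s0 < S" by auto
    note du = C2_pts[OF C2u] and dv = C2_pts[OF C2v]
    have K1: "pd_th (pd_th u) \<theta>0 s0 - pd_th (pd_th v) \<theta>0 s0 \<le> 0"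
    proof (rule max_2nd[of "\<theta>0 - 1" \<theta>0 "\<theta>0 + 1" "\<lambda>t. u t s0 - v t s0" "\<lambda>t. pd_th u t s0 - pd_th v t s0" "\<lambda>_. 1"])
      show "\<forall>x\<in>{\<theta>0 - 1<..<\<theta>0 + 1}. u x s0 - v x s0 \<le> u \<theta>0 s0 - v \<theta>0 s0"
        using gmax[of s0] s0 by (auto simp: gdef)
      show "\<forall>x\<in>{\<theta>0 - 1<..<\<theta>0 + 1}. ((\<lambda>t. u t s0 - v t s0) has_real_derivative pd_th u x s0 - pd_th v x s0) (at x)"
        using du(1)[OF s0p(1)] dv(1)[OF s0p(1)] by (auto intro: DERIV_diff)
      show "((\<lambda>t. pd_th u t s0 - pd_th v t s0) has_real_derivative pd_th (pd_th u) \<theta>0 s0 - pd_th (pd_th v) \<theta>0 s0) (at \<theta>0)"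
        using du(3)[OF s0p(1)] dv(3)[OF s0p(1)] by (auto intro: DERIV_diff)
    qed auto
    obtain r' where r': "(r has_real_derivative r') (at s0)"
      using rder s0p DERIV_deriv_iff_real_differentiable by blast
    have rpos': "\<forall>b>0. r b > 0" using rpos by auto
    note LU = lb_reduce[OF rpos' met r' s0p(1) C2u, of \<theta>0]
    note LV = lb_reduce[OF rpos' met r' s0p(1) C2v, of \<theta>0]
    define Xu where "Xu = r' * pd_s u \<theta>0 s0 + r s0 * pd_s (pd_s u) \<theta>0 s0"
    define Xv where "Xv = r' * pd_s v \<theta>0 s0 + r s0 * pd_s (pd_s v) \<theta>0 s0"
    have rs0: "r s0 > 0" using rpos s0 by auto
    have K2: "Xu - Xv + 2 * \<delta> * (1 / r s0) \<le> 0"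
    proof (rule max_2nd[of 0 s0 S "\<lambda>x. u \<theta>0 x - v \<theta>0 x - \<epsilon> * h x + \<delta> * (h x)^2"
          "\<lambda>x. pd_s u \<theta>0 x - pd_s v \<theta>0 x - \<epsilon> * (1 / r x) + \<delta> * (2 * h x * (1 / r x))" r
          "\<lambda>x. r x * pd_s u \<theta>0 x - r x * pd_s v \<theta>0 x - \<epsilon> + 2 * \<delta> * h x"])
      show "0 < s0" "s0 < S" using s0p by auto
      show "\<forall>x\<in>{0<..<S}. u \<theta>0 x - v \<theta>0 x - \<epsilon> * h x + \<delta> * (h x)^2 \<le> u \<theta>0 s0 - v \<theta>0 s0 - \<epsilon> * h s0 + \<delta> * (h s0)^2"
        using gmax[of _ \<theta>0] by (auto simp: gdef)
      show "\<forall>x\<in>{0<..<S}. ((\<lambda>x. u \<theta>0 x - v \<theta>0 x - \<epsilon> * h x + \<delta> * (h x)^2) has_real_derivative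
            pd_s u \<theta>0 x - pd_s v \<theta>0 x - \<epsilon> * (1 / r x) + \<delta> * (2 * h x * (1 / r x))) (at x)"
      proof
        fix x :: real assume x: "x \<in> {0<..<S}"
        have hx: "(h has_real_derivative 1 / r x) (at x)" using hder x by auto
        show "((\<lambda>x. u \<theta>0 x - v \<theta>0 x - \<epsilon> * h x + \<delta> * (h x)^2) has_real_derivative
            pd_s u \<theta>0 x - pd_s v \<theta>0 x - \<epsilon> * (1 / r x) + \<delta> * (2 * h x * (1 / r x))) (at x)"
          using x du(2)[of x \<theta>0] dv(2)[of x \<theta>0] hx
          by (auto intro!: derivative_eq_intros)
      qed
      show "\<forall>x\<in>{0<..<S}. 0 < r x" using rpos by auto
      show "\<forall>x\<in>{0<..<S}. r x * pd_s u \<theta>0 x - r x * pd_s v \<theta>0 x - \<epsilon> + 2 * \<delta> * h x =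
            r x * (pd_s u \<theta>0 x - pd_s v \<theta>0 x - \<epsilon> * (1 / r x) + \<delta> * (2 * h x * (1 / r x)))"
      proof
        fix x :: real assume x: "x \<in> {0<..<S}"
        then have "r x > 0" using rpos by auto
        then show "r x * pd_s u \<theta>0 x - r x * pd_s v \<theta>0 x - \<epsilon> + 2 * \<delta> * h x =
            r x * (pd_s u \<theta>0 x - pd_s v \<theta>0 x - \<epsilon> * (1 / r x) + \<delta> * (2 * h x * (1 / r x)))"
          by (simp add: field_simps)
      qed
      show "((\<lambda>x. r x * pd_s u \<theta>0 x - r x * pd_s v \<theta>0 x - \<epsilon> + 2 * \<delta> * h x) has_real_derivative
            Xu - Xv + 2 * \<delta> * (1 / r s0)) (at s0)"
      proof -
        have hs0: "(h has_real_derivative 1 / r s0) (at s0)" using hder s0p by auto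
        have "((\<lambda>x. (r x * pd_s u \<theta>0 x - r x * pd_s v \<theta>0 x - \<epsilon>) + 2 * \<delta> * h x) has_real_derivative
            (Xu - Xv - 0) + 2 * \<delta> * (1 / r s0)) (at s0)"
          unfolding Xu_def Xv_def
          by (rule DERIV_add[OF DERIV_diff[OF DERIV_diff[OF LU(1) LV(1)] DERIV_const] DERIV_cmult[OF hs0]])
        then show ?thesis by simp
      qed
    qed
    have "pd_th (pd_th u) \<theta>0 s0 / r s0 + Xu = 0" using LU(2) LBu[OF s0p(1), of \<theta>0] rs0 by (simp add: Xu_def)
    moreover have "pd_th (pd_th v) \<theta>0 s0 / r s0 + Xv = 0" using LV(2) LBv[OF s0p(1), of \<theta>0] rs0 by (simp add: Xv_def)
    ultimately have "Xu - Xv = - (pd_th (pd_th u) \<theta>0 s0 - pd_th (pd_th v) \<theta>0 s0) / r s0"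
      using diff_divide_distrib[of "pd_th (pd_th u) \<theta>0 s0" "pd_th (pd_th v) \<theta>0 s0" "r s0"]
      by (simp only: minus_divide_left[symmetric])
    moreover have "- (pd_th (pd_th u) \<theta>0 s0 - pd_th (pd_th v) \<theta>0 s0) / r s0 \<ge> 0"
      using K1 rs0 by simp
    moreover have "2 * \<delta> * (1 / r s0) > 0" using \<delta> rs0 by simp
    ultimately show False using K2 by linarith
  qed
qed

lemma amhm:
  fixes x c :: real
  assumes "x > 0" "c > 0"
  shows "2 / c - x / c^2 \<le> 1 / x"
proof -
  have "0 \<le> (x - c)^2 / (x * c^2)" using assms by simp
  also have "(x - c)^2 / (x * c^2) = 1 / x - 2 / c + x / c^2" using assms
    by (simp add: field_simps power2_eq_square)
  finally show ?thesis by simp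
qed

theorem theorem8p3:
  fixes \<gamma>1 \<gamma>2 :: "real \<Rightarrow> real"
  assumes smooth1: "smooth_near_halfline \<gamma>1"
    and smooth2: "smooth_near_halfline \<gamma>2"
    and pos: "\<forall>s\<ge>0. \<gamma>1 s > 0 \<and> \<gamma>2 s > 0"
    and arclength: "\<forall>s\<ge>0. hyp_inner (hcurve \<gamma>1 \<gamma>2 s)
                       (vector_derivative (hcurve \<gamma>1 \<gamma>2) (at s))
                       (vector_derivative (hcurve \<gamma>1 \<gamma>2) (at s)) = 1"
    and confined: "\<exists>L. ((\<lambda>s. centroid_xg \<gamma>1 \<gamma>2 s) \<longlongrightarrow> L) at_top"
  shows "parabolic_end (\<lambda>\<theta> s. rot3 \<theta> (hcurve \<gamma>1 \<gamma>2 s))"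
proof -
  let ?F = "\<lambda>\<theta> s. rot3 \<theta> (hcurve \<gamma>1 \<gamma>2 s)"
  define r where "r s = \<gamma>1 s / \<gamma>2 s" for s
  define h where "h S = integral {0..S} (\<lambda>t. 1 / r t)" for S
  have d1: "\<gamma>1 differentiable (at x)" if "x \<ge> 0" for x
  proof -
    obtain e where "e > 0" "\<forall>k x. x > -e \<longrightarrow> ((deriv ^^ k) \<gamma>1) differentiable (at x)"
      using smooth1 unfolding smooth_near_halfline_def by blast
    moreover have "x > -e" using that calculation(1) by linarith
    ultimately have "((deriv ^^ 0) \<gamma>1) differentiable (at x)" by blast
    then show ?thesis by simp
  qed
  have d2: "\<gamma>2 differentiable (at x)" if "x \<ge> 0" for x
  proof -
    obtain e where "e > 0" "\<forall>k x. x > -e \<longrightarrow> ((deriv ^^ k) \<gamma>2) differentiable (at x)"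
      using smooth2 unfolding smooth_near_halfline_def by blast
    moreover have "x > -e" using that calculation(1) by linarith
    ultimately have "((deriv ^^ 0) \<gamma>2) differentiable (at x)" by blast
    then show ?thesis by simp
  qed
  have rpos: "\<forall>b\<ge>0. r b > 0" using pos by (simp add: r_def)
  have rder: "\<forall>b>0. r differentiable (at b)"
  proof (intro allI impI)
    fix b :: real assume b: "b > 0"
    have D1: "(\<gamma>1 has_real_derivative deriv \<gamma>1 b) (at b)" using d1 b DERIV_deriv_iff_real_differentiable by auto
    have D2: "(\<gamma>2 has_real_derivative deriv \<gamma>2 b) (at b)" using d2 b DERIV_deriv_iff_real_differentiable by auto
    have "\<gamma>2 b \<noteq> 0" using pos b by (metis less_imp_le less_irrefl)
    from DERIV_divide[OF D1 D2 this] show "r differentiable (at b)"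
      unfolding r_def[abs_def] using real_differentiable_def by blast
  qed
  have met: "\<forall>a b. b > 0 \<longrightarrow> metE ?F a b = (r b)^2 \<and> metF ?F a b = 0 \<and> metG ?F a b = 1"
  proof (intro allI impI)
    fix a b :: real assume b: "b > 0"
    then have b0: "b \<ge> 0" by simp
    have p2: "\<gamma>2 b > 0" using pos b0 by blast
    have al: "hyp_inner (hcurve \<gamma>1 \<gamma>2 b) (vector_derivative (hcurve \<gamma>1 \<gamma>2) (at b))
                       (vector_derivative (hcurve \<gamma>1 \<gamma>2) (at b)) = 1" using arclength b0 by blast
    note G = geo[OF d1[OF b0] d2[OF b0] p2 al, of a]
    show "metE ?F a b = (r b)^2 \<and> metF ?F a b = 0 \<and> metG ?F a b = 1"
      using G by (simp add: r_def)
  qed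
  have ic: "isCont (\<lambda>t. 1 / r t) x" if "x \<ge> 0" for x
  proof -
    have "isCont \<gamma>1 x" "isCont \<gamma>2 x" using d1[OF that] d2[OF that] by (auto intro: differentiable_imp_continuous_within)
    then show ?thesis using pos that unfolding r_def by (auto intro!: continuous_intros)
  qed
  have cr: "continuous_on {0..S} (\<lambda>t. 1 / r t)" for S
    using ic by (intro continuous_at_imp_continuous_on) auto
  have h0: "h 0 = 0" by (simp add: h_def)
  have hcont: "\<forall>S>0. continuous_on {0..S} h"
    unfolding h_def[abs_def] using indefinite_integral_continuous_1[OF integrable_continuous_real[OF cr]] by blast
  have hder: "\<forall>b>0. (h has_real_derivative 1 / r b) (at b)"
  proof (intro allI impI)
    fix b :: real assume b: "b > 0"
    have "(h has_real_derivative 1 / r b) (at b within {0..b+1})"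
      unfolding h_def[abs_def] by (rule integral_has_real_derivative[OF cr]) (use b in auto)
    moreover have "at b within {0..b+1} = at b" by (rule at_within_interior) (use b in simp)
    ultimately show "(h has_real_derivative 1 / r b) (at b)" by (simp only:)
  qed
  have hinf: "\<forall>M. \<exists>S0. \<forall>S\<ge>S0. M \<le> h S"
  proof
    fix M :: real
    obtain L where L: "((\<lambda>s. centroid_xg \<gamma>1 \<gamma>2 s) \<longlongrightarrow> L) at_top" using confined by blast
    have "eventually (\<lambda>s. centroid_xg \<gamma>1 \<gamma>2 s < L + 1) at_top" using order_tendstoD(2)[OF L] by simp
    then obtain N where N: "\<And>s. s \<ge> N \<Longrightarrow> centroid_xg \<gamma>1 \<gamma>2 s < L + 1" by (auto simp: eventually_at_top_linorder)
    define c where "c = \<bar>L\<bar> + 1"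
    have c: "c > 0" "L + 1 \<le> c" unfolding c_def by linarith+
    have key: "S / c \<le> h S" if S: "S \<ge> N" "S \<ge> 1" for S
    proof -
      have cr2: "continuous_on {0..S} r"
        using d1 d2 pos unfolding r_def
        by (intro continuous_at_imp_continuous_on ballI continuous_intros) (auto intro: differentiable_imp_continuous_within)
      have ir: "r integrable_on {0..S}" by (rule integrable_continuous_real[OF cr2])
      have "integral {0..S} (\<lambda>t. 2 / c - r t / c^2) \<le> h S"
        unfolding h_def
      proof (rule integral_le)
        show "(\<lambda>t. 2 / c - r t / c^2) integrable_on {0..S}"
          by (intro integrable_diff integrable_on_divide ir integrable_const_ivl)
        show "(\<lambda>t. 1 / r t) integrable_on {0..S}" by (rule integrable_continuous_real[OF cr])
        fix x assume "x \<in> {0..S}"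
        then show "2 / c - r x / c^2 \<le> 1 / r x" using amhm[of "r x" c] rpos c by auto
      qed
      moreover have "integral {0..S} (\<lambda>t. 2 / c - r t / c^2) = 2 / c * S - integral {0..S} r / c^2"
        using S ir by (simp add: integral_diff integrable_const_ivl integrable_on_divide integral_divide content_real)
      moreover have "integral {0..S} r = S * centroid_xg \<gamma>1 \<gamma>2 S"
        using S by (simp add: centroid_xg_def r_def[abs_def])
      moreover have "S * centroid_xg \<gamma>1 \<gamma>2 S \<le> S * c" using N[OF S(1)] c S by (intro mult_left_mono) auto
      moreover have "integral {0..S} r / c^2 \<le> S * c / c^2"
        using calculation(3,4) c by (simp add: divide_right_mono)
      ultimately have "2 / c * S - S * c / c^2 \<le> h S"
        by linarith
      moreover have "2 / c * S - S * c / c^2 = S / c" using c by (simp add: field_simps power2_eq_square)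
      ultimately show ?thesis by simp
    qed
    show "\<exists>S0. \<forall>S\<ge>S0. M \<le> h S"
    proof (intro exI allI impI)
      fix S assume S: "S \<ge> max (max N 1) (M * c)"
      have "M \<le> S / c" using S c by (simp add: field_simps)
      also have "\<dots> \<le> h S" using key S by simp
      finally show "M \<le> h S" .
    qed
  qed
  show ?thesis unfolding parabolic_end_def
  proof (intro allI impI)
    fix u v \<theta> and s :: real
    assume H: "bounded_harmonic_on_end ?F u \<and> bounded_harmonic_on_end ?F v \<and> (\<forall>\<theta>. u \<theta> 0 = v \<theta> 0)"
      and s: "s \<ge> 0"
    have U: "bounded_harmonic_on_end ?F u" and V: "bounded_harmonic_on_end ?F v"
      and bd: "\<forall>\<theta>. u \<theta> 0 = v \<theta> 0" using H by auto
    have bd': "\<forall>\<theta>. v \<theta> 0 = u \<theta> 0" using bd by simp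
    have "u \<theta> s \<le> v \<theta> s"
      by (rule onesided[OF rpos rder met h0 hcont hder hinf U V bd s])
    moreover have "v \<theta> s \<le> u \<theta> s"
      by (rule onesided[OF rpos rder met h0 hcont hder hinf V U bd' s])
    ultimately show "u \<theta> s = v \<theta> s" by simp
  qed
qed
end
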